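(* For any $n\geq 2$, $\mathbf{D}_n=(D_n,<)$ is not ultrahomogeneous.
   Context: Fix $n\geq 2$ and a set $D_n\subseteq\mathbb{Q}^n$ which is dense in $\mathbb{Q}^n$ (product topology) and such that no two distinct points of $D_n$ share a common coordinate; $<$ is the product order ($\mathbf{a}<\mathbf{b}$ iff $a_i\leq b_i$ for all $i$ and $\mathbf{a}\neq\mathbf{b}$). A structure is ultrahomogeneous if every isomorphism between finite substructures extends to an automorphism of the whole structure. *)

theory Defs
  imports Complex_Main
begin

text \<open>Points of Q^n are functions 'n => rat for a finite index type 'n with CARD('n) = n.\<close>

definition prod_less :: "('n \<Rightarrow> rat) \<Rightarrow> ('n \<Rightarrow> rat) \<Rightarrow> bool" where
  "prod_less a b \<longleftrightarrow> (\<forall>i. a i \<le> b i) \<and> a \<noteq> b"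

text \<open>Density in Q^n with the product topology: every nonempty basic open box
  (product of open rational intervals) meets D.\<close>
definition dense_in_Qn :: "('n::finite \<Rightarrow> rat) set \<Rightarrow> bool" where
  "dense_in_Qn D \<longleftrightarrow>
     (\<forall>a b :: 'n \<Rightarrow> rat. (\<forall>i. a i < b i) \<longrightarrow> (\<exists>d\<in>D. \<forall>i. a i < d i \<and> d i < b i))"

definition no_shared_coord :: "('n \<Rightarrow> rat) set \<Rightarrow> bool" where
  "no_shared_coord D \<longleftrightarrow> (\<forall>x\<in>D. \<forall>y\<in>D. x \<noteq> y \<longrightarrow> (\<forall>i. x i \<noteq> y i))"

definition partial_iso :: "'a set \<Rightarrow> ('a \<Rightarrow> 'a \<Rightarrow> bool) \<Rightarrow> 'a set \<Rightarrow> 'a set \<Rightarrow> ('a \<Rightarrow> 'a) \<Rightarrow> bool" where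
  "partial_iso A R B C f \<longleftrightarrow> B \<subseteq> A \<and> C \<subseteq> A \<and> bij_betw f B C \<and>
     (\<forall>x\<in>B. \<forall>y\<in>B. R x y \<longleftrightarrow> R (f x) (f y))"

definition automorphism :: "'a set \<Rightarrow> ('a \<Rightarrow> 'a \<Rightarrow> bool) \<Rightarrow> ('a \<Rightarrow> 'a) \<Rightarrow> bool" where
  "automorphism A R g \<longleftrightarrow> partial_iso A R A A g"

definition ultrahomogeneous :: "'a set \<Rightarrow> ('a \<Rightarrow> 'a \<Rightarrow> bool) \<Rightarrow> bool" where
  "ultrahomogeneous A R \<longleftrightarrow>
     (\<forall>B C f. finite B \<and> finite C \<and> partial_iso A R B C f \<longrightarrow>
        (\<exists>g. automorphism A R g \<and> (\<forall>x\<in>B. g x = f x)))"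

end

theory Submission
  imports Defs
begin

lemma box_pt:
  assumes "dense_in_Qn (D :: ('n::finite \<Rightarrow> rat) set)" "\<And>k. lo k < hi k"
  obtains d where "d \<in> D" "\<And>k. lo k < d k" "\<And>k. d k < hi k"
  using assms unfolding dense_in_Qn_def by blast

theorem proposition2p4:
  fixes D :: "('n::finite \<Rightarrow> rat) set"
  assumes "card (UNIV :: 'n set) \<ge> 2"
    and "dense_in_Qn D"
    and "no_shared_coord D"
  shows "\<not> ultrahomogeneous D prod_less"
proof
  assume U: "ultrahomogeneous D prod_less"
  obtain i j :: 'n where ij: "i \<noteq> j"
  proof -
    have "\<not> card (UNIV :: 'n set) \<le> 1" using assms(1) by linarith
    then show ?thesis using that card_le_Suc0_iff_eq[OF finite_UNIV[where ?'a='n]] by auto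
  qed
  obtain a where aD: "a \<in> D" and a1: "\<And>k. ((\<lambda>k. 4)(i:=0)) k < a k" and a2: "\<And>k. a k < ((\<lambda>k. 5)(i:=1)) k"
    by (rule box_pt[OF assms(2), where lo="(\<lambda>k. 4)(i:=0)" and hi="(\<lambda>k. 5)(i:=1)"]) auto
  obtain b where bD: "b \<in> D" and b1: "\<And>k. ((\<lambda>k. 0)(i:=2,j:=2)) k < b k" and b2: "\<And>k. b k < ((\<lambda>k. 1)(i:=3,j:=3)) k"
    by (rule box_pt[OF assms(2), where lo="(\<lambda>k. 0)(i:=2,j:=2)" and hi="(\<lambda>k. 1)(i:=3,j:=3)"]) auto
  obtain c where cD: "c \<in> D" and c1: "\<And>k. ((\<lambda>k. 0)(i:=4)) k < c k" and c2: "\<And>k. c k < ((\<lambda>k. 1)(i:=5)) k"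
    by (rule box_pt[OF assms(2), where lo="(\<lambda>k. 0)(i:=4)" and hi="(\<lambda>k. 1)(i:=5)"]) auto
  obtain z where zD: "z \<in> D" and z1: "\<And>k. ((\<lambda>k. 6)(i:=3)) k < z k" and z2: "\<And>k. z k < ((\<lambda>k. 7)(i:=4)) k"
    by (rule box_pt[OF assms(2), where lo="(\<lambda>k. 6)(i:=3)" and hi="(\<lambda>k. 7)(i:=4)"]) auto
  have ai: "0 < a i" "a i < 1" using a1[of i] a2[of i] by simp_all
  have ao: "k \<noteq> i \<Longrightarrow> 4 < a k \<and> a k < 5" for k using a1[of k] a2[of k] by simp
  have bi: "2 < b i" "b i < 3" using b1[of i] b2[of i] by (auto split: if_splits)
  have bj: "2 < b j" "b j < 3" using b1[of j] b2[of j] ij by simp_all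
  have bo: "k \<noteq> i \<Longrightarrow> k \<noteq> j \<Longrightarrow> 0 < b k \<and> b k < 1" for k using b1[of k] b2[of k] by auto
  have ci: "4 < c i" "c i < 5" using c1[of i] c2[of i] by simp_all
  have co: "k \<noteq> i \<Longrightarrow> 0 < c k \<and> c k < 1" for k using c1[of k] c2[of k] by simp
  have zi: "3 < z i" "z i < 4" using z1[of i] z2[of i] by simp_all
  have zo: "k \<noteq> i \<Longrightarrow> 6 < z k \<and> z k < 7" for k using z1[of k] z2[of k] by simp
  have aj: "4 < a j" using ao[of j] ij by auto
  have cj: "c j < 1" using co[of j] ij by auto
  have "a i \<noteq> b i" "b i \<noteq> c i" "a i \<noteq> c i" using ai bi ci by auto
  then have ab: "a \<noteq> b" "b \<noteq> c" "a \<noteq> c" by auto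
  have ncomp: "\<not> prod_less x y" if "x \<in> {a,b,c}" "y \<in> {a,b,c}" for x y
  proof -
    have "(a i > b i \<or> a j > b j) \<and> (b i > a i \<or> b j > a j) \<and>
          (a i > c i \<or> a j > c j) \<and> (c i > a i \<or> c j > a j) \<and>
          (c i > b i \<or> c j > b j) \<and> (b i > c i \<or> b j > c j)"
      using ai bi ci aj bj cj by auto
    then show ?thesis using that unfolding prod_less_def by (auto simp: not_le)
  qed
  define f where "f = id(b:=c, c:=b)"
  have fa: "f a = a" "f b = c" "f c = b" using ab unfolding f_def by (simp_all add: fun_upd_def)
  have bijf: "bij_betw f {a,b,c} {a,b,c}"
    unfolding bij_betw_def inj_on_def using fa ab by auto
  have pf: "partial_iso D prod_less {a,b,c} {a,b,c} f"
    unfolding partial_iso_def using aD bD cD bijf ncomp fa by auto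
  have "\<exists>g. automorphism D prod_less g \<and> (\<forall>x\<in>{a,b,c}. g x = f x)"
    using U[unfolded ultrahomogeneous_def, rule_format, of "{a,b,c}" "{a,b,c}" f] pf by simp
  then obtain g where g: "automorphism D prod_less g" and gx: "\<forall>x\<in>{a,b,c}. g x = f x"
    by blast
  have bijg: "bij_betw g D D" and pres: "\<And>x y. x \<in> D \<Longrightarrow> y \<in> D \<Longrightarrow> prod_less x y \<longleftrightarrow> prod_less (g x) (g y)"
    using g unfolding automorphism_def partial_iso_def by auto
  have ga: "g a = a" "g b = c" "g c = b" using gx fa by auto
  have za: "prod_less a z" unfolding prod_less_def
  proof
    show "\<forall>k. a k \<le> z k"
    proof
      fix k show "a k \<le> z k" using ai zi ao[of k] zo[of k] by (cases "k = i") auto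
    qed
    show "a \<noteq> z" using ai zi by auto
  qed
  have zb: "prod_less b z" unfolding prod_less_def
  proof
    show "\<forall>k. b k \<le> z k"
    proof
      fix k show "b k \<le> z k" using bi bj zi bo[of k] zo[of k] by (cases "k = i"; cases "k = j") auto
    qed
    show "b \<noteq> z" using bi zi by auto
  qed
  have zc: "\<not> prod_less c z" using ci zi unfolding prod_less_def by (auto simp: not_le intro!: exI[of _ i])
  have gzD: "g z \<in> D" using bijg zD by (auto simp: bij_betw_def)
  have 1: "prod_less a (g z)" using pres[OF aD zD] za ga by simp
  have 2: "prod_less c (g z)" using pres[OF bD zD] zb ga by simp
  have 3: "prod_less b (g z)"
    unfolding prod_less_def
  proof
    show "\<forall>k. b k \<le> g z k"
    proof
      fix k
      have "a k \<le> g z k" "c k \<le> g z k" using 1 2 unfolding prod_less_def by auto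
      then show "b k \<le> g z k" using bi bj ci aj ao[of k] bo[of k]
        by (cases "k = i"; cases "k = j") auto
    qed
    show "b \<noteq> g z" using 1 ncomp by auto
  qed
  have "prod_less c z" using pres[OF cD zD] 3 ga by simp
  then show False using zc by simp
qed

end
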